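(* For every $f\in\mathcal{F}_3$ and every $\mathbf{x}\in[0,1]^3$, $$f^{++}(\mathbf{x})=h(\mathbf{x})+\max_{\omega\in\{\underline\omega,\overline\omega\}}(g_2-g_1)\,\omega,$$ where, letting $x_{i^\star}\le x_{j^\star}\le x_{k^\star}$ denote the coordinates of $\mathbf{x}$ in nondecreasing order ($\{i^\star,j^\star,k^\star\}=\{1,2,3\}$), $\underline\omega=\max\big[(1-x_{k^\star})(1-x_{i^\star}-x_{j^\star}),\,0\big]$, $\overline\omega=\min\big[\prod_{i=1}^3x_i+\prod_{i=1}^3(1-x_i),\,(1-x_{j^\star})(1-x_{k^\star})\big]$, $g_1=1+f(1)+f(2)+f(3)$, $g_2=f(1,2)+f(1,3)+f(2,3)$, and $h(\mathbf{x})=\sum_{i=1}^3x_if(i)-\sum_{1\le i<j\le3}x_ix_j\big[f(i)+f(j)-f(i,j)\big]-(g_2-g_1)\big[\prod_{i=1}^3x_i+\prod_{i=1}^3(1-x_i)\big]$.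
   Context: $[n]=\{1,\dots,n\}$. A set function $f:2^{[n]}\to\mathbb{R}_+$ is monotone if $f(S)\le f(T)$ for $S\subseteq T$, submodular if $f(S)+f(T)\ge f(S\cap T)+f(S\cup T)$. $\mathcal{F}_n$ is the set of monotone submodular $f:2^{[n]}\to\mathbb{R}_+$ with $f(\emptyset)=0$, $f([n])=1$. Write $f(i)=f(\{i\})$, $f(i,j)=f(\{i,j\})$. For $\mathbf{x}\in[0,1]^n$, the upper pairwise independent extension is $f^{++}(\mathbf{x})=\max\sum_{S\subseteq[n]}\theta(S)f(S)$ over $\theta:2^{[n]}\to\mathbb{R}_{\ge0}$ with $\sum_S\theta(S)=1$, $\sum_{S\ni i}\theta(S)=x_i$ for all $i$, and $\sum_{S\ni i,j}\theta(S)=x_ix_j$ for all $i<j$. *)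

theory Defs
  imports Complex_Main
begin

definition monotone_sf :: "nat \<Rightarrow> (nat set \<Rightarrow> real) \<Rightarrow> bool" where
  "monotone_sf n f \<longleftrightarrow> (\<forall>S T. S \<subseteq> T \<and> T \<subseteq> {1..n} \<longrightarrow> f S \<le> f T)"

definition submodular_sf :: "nat \<Rightarrow> (nat set \<Rightarrow> real) \<Rightarrow> bool" where
  "submodular_sf n f \<longleftrightarrow> (\<forall>S T. S \<subseteq> {1..n} \<and> T \<subseteq> {1..n} \<longrightarrow>
      f S + f T \<ge> f (S \<inter> T) + f (S \<union> T))"

definition F_class :: "nat \<Rightarrow> (nat set \<Rightarrow> real) set" where
  "F_class n = {f. (\<forall>S \<subseteq> {1..n}. f S \<ge> 0) \<and> monotone_sf n f \<and> submodular_sf n f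
                  \<and> f {} = 0 \<and> f {1..n} = 1}"

definition pw_feasible :: "nat \<Rightarrow> (nat \<Rightarrow> real) \<Rightarrow> (nat set \<Rightarrow> real) \<Rightarrow> bool" where
  "pw_feasible n x \<theta> \<longleftrightarrow>
     (\<forall>S \<in> Pow {1..n}. \<theta> S \<ge> 0) \<and>
     (\<Sum>S\<in>Pow {1..n}. \<theta> S) = 1 \<and>
     (\<forall>i \<in> {1..n}. (\<Sum>S\<in>{S \<in> Pow {1..n}. i \<in> S}. \<theta> S) = x i) \<and>
     (\<forall>i \<in> {1..n}. \<forall>j \<in> {1..n}. i < j \<longrightarrow>
        (\<Sum>S\<in>{S \<in> Pow {1..n}. i \<in> S \<and> j \<in> S}. \<theta> S) = x i * x j)"

text \<open>Upper pairwise independent extension (the maximum is attained: the feasible set is a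
  nonempty compact polytope, so the supremum equals the maximum).\<close>
definition upper_pw_ext :: "nat \<Rightarrow> (nat set \<Rightarrow> real) \<Rightarrow> (nat \<Rightarrow> real) \<Rightarrow> real" where
  "upper_pw_ext n f x = Sup {(\<Sum>S\<in>Pow {1..n}. \<theta> S * f S) | \<theta>. pw_feasible n x \<theta>}"

end

theory Submission imports Defs begin
lemma pow3: "Pow {1..3::nat} = {{},{1},{2},{3},{1,2},{1,3},{2,3},{1,2,3}}"
proof -
  have "{1..3::nat} = {1,2,3}" by auto
  then show ?thesis by (simp add: Pow_insert insert_commute)
qed
lemma sum_pow3: "(\<Sum>S\<in>Pow {1..3::nat}. g S) = g {} + g {1} + g {2} + g {3} + g {1,2} + g {1,3} + g {2,3} + g {1,2,3}"
  unfolding pow3 by (simp add: insert_commute doubleton_eq_iff insert_eq_iff  algebra_simps)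
lemma sorted3:
  fixes p q r :: real
  assumes "0\<le>p" "p\<le>q" "q\<le>r" "r\<le>1"
  shows "(1-r)*(1-p-q) = p*q*r + (1-p)*(1-q)*(1-r) - p*q"
    "p*q \<le> p*r" "p*q \<le> q*r"
    "(1-q)*(1-r) = p*q*r + (1-p)*(1-q)*(1-r) + p - p*q - p*r"
    "p - p*q - p*r \<le> q - p*q - q*r" "p - p*q - p*r \<le> r - p*r - q*r"
proof -
  show "(1-r)*(1-p-q) = p*q*r + (1-p)*(1-q)*(1-r) - p*q" by (simp add: algebra_simps)
  show "(1-q)*(1-r) = p*q*r + (1-p)*(1-q)*(1-r) + p - p*q - p*r" by (simp add: algebra_simps)
  show "p*q \<le> p*r" using assms by (simp add: mult_left_mono)
  show "p*q \<le> q*r" using assms mult_right_mono[of p r q] by (simp add: mult.commute)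
  have "(q - p) * (1 - r) \<ge> 0" using assms by simp
  then show "p - p*q - p*r \<le> q - p*q - q*r" by (simp add: algebra_simps)
  have "(r - p) * (1 - q) \<ge> 0" using assms by simp
  then show "p - p*q - p*r \<le> r - p*r - q*r" by (simp add: algebra_simps)
qed

lemma lohi:
  fixes a b c :: real
  assumes "0\<le>a" "a\<le>1" "0\<le>b" "b\<le>1" "0\<le>c" "c\<le>1"
  defines "P \<equiv> a*b*c + (1-a)*(1-b)*(1-c)"
  shows "max ((1 - Max{a,b,c}) * (1 - Min{a,b,c} - (a+b+c-Max{a,b,c}-Min{a,b,c}))) 0
     = max (max (max (P - b*c) (P - a*c)) (P - a*b)) 0" (is ?A)
   and "min P ((1 - (a+b+c-Max{a,b,c}-Min{a,b,c})) * (1 - Max{a,b,c}))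
     = min (min (min (P + a - a*b - a*c) (P + b - a*b - b*c)) (P + c - a*c - b*c)) P" (is ?B)
proof -
  have comm: "b*a = a*b" "c*a = a*c" "c*b = b*c" "a*c*b = a*b*c" "b*a*c = a*b*c" "b*c*a = a*b*c" "c*a*b = a*b*c" "c*b*a = a*b*c"
     "(1-a)*(1-c)*(1-b) = (1-a)*(1-b)*(1-c)" "(1-b)*(1-a)*(1-c) = (1-a)*(1-b)*(1-c)" "(1-b)*(1-c)*(1-a) = (1-a)*(1-b)*(1-c)"
     "(1-c)*(1-a)*(1-b) = (1-a)*(1-b)*(1-c)" "(1-c)*(1-b)*(1-a) = (1-a)*(1-b)*(1-c)" by (simp_all add: algebra_simps)
  have "(a\<le>b \<and> b\<le>c) \<or> (a\<le>c \<and> c\<le>b) \<or> (b\<le>a \<and> a\<le>c) \<or> (b\<le>c \<and> c\<le>a) \<or> (c\<le>a \<and> a\<le>b) \<or> (c\<le>b \<and> b\<le>a)" by linarith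
  then have "?A \<and> ?B"
  proof (elim disjE conjE)
    assume h: "a\<le>b" "b\<le>c"
    have "Max{a,b,c} = c" "Min{a,b,c} = a" using h by (auto simp: max_def min_def)
    note M = this
    from comm sorted3[of a b c] h assms show ?thesis unfolding M P_def by (smt (verit) mult.commute)
  next
    assume h: "a\<le>c" "c\<le>b"
    have "Max{a,b,c} = b" "Min{a,b,c} = a" using h by (auto simp: max_def min_def)
    note M = this
    from comm sorted3[of a c b] h assms show ?thesis unfolding M P_def by (smt (verit) mult.commute)
  next
    assume h: "b\<le>a" "a\<le>c"
    have "Max{a,b,c} = c" "Min{a,b,c} = b" using h by (auto simp: max_def min_def)
    note M = this
    from comm sorted3[of b a c] h assms show ?thesis unfolding M P_def by (smt (verit) mult.commute)
  next
    assume h: "b\<le>c" "c\<le>a"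
    have "Max{a,b,c} = a" "Min{a,b,c} = b" using h by (auto simp: max_def min_def)
    note M = this
    from comm sorted3[of b c a] h assms show ?thesis unfolding M P_def by (smt (verit) mult.commute)
  next
    assume h: "c\<le>a" "a\<le>b"
    have "Max{a,b,c} = b" "Min{a,b,c} = c" using h by (auto simp: max_def min_def)
    note M = this
    from comm sorted3[of c a b] h assms show ?thesis unfolding M P_def by (smt (verit) mult.commute)
  next
    assume h: "c\<le>b" "b\<le>a"
    have "Max{a,b,c} = a" "Min{a,b,c} = c" using h by (auto simp: max_def min_def)
    note M = this
    from comm sorted3[of c b a] h assms show ?thesis unfolding M P_def by (smt (verit) mult.commute)
  qed
  then show ?A ?B by auto
qed
lemma feas3:
  "pw_feasible 3 x \<theta> \<longleftrightarrow>
    (0 \<le> \<theta> {} \<and> 0 \<le> \<theta> {1} \<and> 0 \<le> \<theta> {2} \<and> 0 \<le> \<theta> {3} \<and> 0 \<le> \<theta> {1,2} \<and> 0 \<le> \<theta> {1,3} \<and> 0 \<le> \<theta> {2,3} \<and> 0 \<le> \<theta> {1,2,3}) \<and>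
    \<theta> {} + \<theta> {1} + \<theta> {2} + \<theta> {3} + \<theta> {1,2} + \<theta> {1,3} + \<theta> {2,3} + \<theta> {1,2,3} = 1 \<and>
    \<theta> {1} + \<theta> {1,2} + \<theta> {1,3} + \<theta> {1,2,3} = x 1 \<and>
    \<theta> {2} + \<theta> {1,2} + \<theta> {2,3} + \<theta> {1,2,3} = x 2 \<and>
    \<theta> {3} + \<theta> {1,3} + \<theta> {2,3} + \<theta> {1,2,3} = x 3 \<and>
    \<theta> {1,2} + \<theta> {1,2,3} = x 1 * x 2 \<and>
    \<theta> {1,3} + \<theta> {1,2,3} = x 1 * x 3 \<and>
    \<theta> {2,3} + \<theta> {1,2,3} = x 2 * x 3"
proof -
  have e: "{1..3::nat} = {1,2,3}" by auto
  have fin: "finite (Pow {1..3::nat})" by simp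
  have p: "Pow {Suc 0,2,3} = {{},{1},{2},{3},{1,2},{1,3},{2,3},{1,2,3}}" using pow3 e by simp
  show ?thesis
    unfolding pw_feasible_def sum.inter_filter[OF fin] sum_pow3
    unfolding pow3 e by (simp add: ac_simps p)
qed
theorem mainTheorem6:
  fixes f :: "nat set \<Rightarrow> real" and x :: "nat \<Rightarrow> real"
  assumes "f \<in> F_class 3"
    and "\<forall>i \<in> {1..3}. 0 \<le> x i \<and> x i \<le> 1"
  shows "let xmax = Max {x 1, x 2, x 3};
             xmin = Min {x 1, x 2, x 3};
             xmid = x 1 + x 2 + x 3 - xmax - xmin;
             P = x 1 * x 2 * x 3 + (1 - x 1) * (1 - x 2) * (1 - x 3);
             \<omega>lo = max ((1 - xmax) * (1 - xmin - xmid)) 0;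
             \<omega>hi = min P ((1 - xmid) * (1 - xmax));
             g1 = 1 + f {1} + f {2} + f {3};
             g2 = f {1,2} + f {1,3} + f {2,3};
             h = (\<Sum>i\<in>{1..3}. x i * f {i})
                 - (\<Sum>(i,j)\<in>{(i,j). i \<in> {1..3} \<and> j \<in> {1..3} \<and> i < j}.
                        x i * x j * (f {i} + f {j} - f {i,j}))
                 - (g2 - g1) * P
         in upper_pw_ext 3 f x = h + max ((g2 - g1) * \<omega>lo) ((g2 - g1) * \<omega>hi)"
proof -
  have e3: "{1..3::nat} = {1,2,3}" by auto
  have x1: "0 \<le> x 1" "x 1 \<le> 1" and x2: "0 \<le> x 2" "x 2 \<le> 1" and x3: "0 \<le> x 3" "x 3 \<le> 1"
    using assms(2) by (auto simp: e3)
  have f0: "f {} = 0" and f13: "f {1..3} = 1" using assms(1) unfolding F_class_def by auto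
  from f13 have f123: "f {1,2,3} = 1" unfolding e3 .
  define xmax where "xmax = Max {x 1, x 2, x 3}"
  define xmin where "xmin = Min {x 1, x 2, x 3}"
  define xmid where "xmid = x 1 + x 2 + x 3 - xmax - xmin"
  define P where "P = x 1 * x 2 * x 3 + (1 - x 1) * (1 - x 2) * (1 - x 3)"
  define lo where "lo = max ((1 - xmax) * (1 - xmin - xmid)) 0"
  define hi where "hi = min P ((1 - xmid) * (1 - xmax))"
  define g1 where "g1 = 1 + f {1} + f {2} + f {3}"
  define g2 where "g2 = f {1,2} + f {1,3} + f {2,3}"
  define h where "h = (\<Sum>i\<in>{1..3}. x i * f {i})
                 - (\<Sum>(i,j)\<in>{(i,j). i \<in> {1..3} \<and> j \<in> {1..3} \<and> i < j}.
                        x i * x j * (f {i} + f {j} - f {i,j}))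
                 - (g2 - g1) * P"
  define d where "d = g2 - g1"
  have lo_eq: "lo = max (max (max (P - x 2 * x 3) (P - x 1 * x 3)) (P - x 1 * x 2)) 0"
    using lohi(1)[OF x1 x2 x3] unfolding lo_def xmax_def xmin_def xmid_def P_def by simp
  have hi_eq: "hi = min (min (min (P + x 1 - x 1 * x 2 - x 1 * x 3) (P + x 2 - x 1 * x 2 - x 2 * x 3)) (P + x 3 - x 1 * x 3 - x 2 * x 3)) P"
    using lohi(2)[OF x1 x2 x3] unfolding hi_def xmax_def xmin_def xmid_def P_def by simp
  have Pexp: "P = 1 - x 1 - x 2 - x 3 + x 1 * x 2 + x 1 * x 3 + x 2 * x 3"
    unfolding P_def by (simp add: algebra_simps)
  have pairs: "{(i,j). i \<in> {1..3::nat} \<and> j \<in> {1..3} \<and> i < j} = {(1,2),(1,3),(2,3)}"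
    by (auto simp: e3)
  have h_eq: "h = x 1 * f {1} + x 2 * f {2} + x 3 * f {3}
       - x 1 * x 2 * (f {1} + f {2} - f {1,2}) - x 1 * x 3 * (f {1} + f {3} - f {1,3})
       - x 2 * x 3 * (f {2} + f {3} - f {2,3}) - d * P"
    unfolding h_def pairs d_def unfolding e3 by simp
  have A: "(\<Sum>S\<in>Pow {1..3}. \<theta> S * f S) = h + d * \<theta> {} \<and> lo \<le> \<theta> {} \<and> \<theta> {} \<le> hi"
    if fe: "pw_feasible 3 x \<theta>" for \<theta>
  proof -
    define t where "t = \<theta> {1,2,3}"
    note c = fe[unfolded feas3]
    have e12: "\<theta> {1,2} = x 1 * x 2 - t" and e13: "\<theta> {1,3} = x 1 * x 3 - t"
      and e23: "\<theta> {2,3} = x 2 * x 3 - t" using c unfolding t_def by linarith+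
    have e1: "\<theta> {1} = x 1 - x 1 * x 2 - x 1 * x 3 + t"
      and e2: "\<theta> {2} = x 2 - x 1 * x 2 - x 2 * x 3 + t"
      and e3': "\<theta> {3} = x 3 - x 1 * x 3 - x 2 * x 3 + t" using c e12 e13 e23 unfolding t_def by linarith+
    have e0: "\<theta> {} = P - t" using c e12 e13 e23 e1 e2 e3' Pexp unfolding t_def by linarith
    have obj: "(\<Sum>S\<in>Pow {1..3}. \<theta> S * f S) = h + d * \<theta> {}"
      unfolding sum_pow3 h_eq e0 e1 e2 e3' e12 e13 e23 f0 f123 t_def[symmetric] d_def g1_def g2_def
      by (simp add: algebra_simps)
    have "0 \<le> t" "0 \<le> \<theta> {}" "0 \<le> \<theta> {1}" "0 \<le> \<theta> {2}" "0 \<le> \<theta> {3}"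
      "0 \<le> \<theta> {1,2}" "0 \<le> \<theta> {1,3}" "0 \<le> \<theta> {2,3}" using c unfolding t_def by auto
    then have "lo \<le> \<theta> {} \<and> \<theta> {} \<le> hi"
      unfolding lo_eq hi_eq using e0 e1 e2 e3' e12 e13 e23 by auto
    with obj show ?thesis by simp
  qed
  have B: "\<exists>\<theta>. pw_feasible 3 x \<theta> \<and> \<theta> {} = \<omega>" if w: "lo \<le> \<omega>" "\<omega> \<le> hi" for \<omega>
  proof -
    define t where "t = P - \<omega>"
    define \<theta> where "\<theta> = (\<lambda>S::nat set. if S = {} then \<omega> else if S = {1} then x 1 - x 1 * x 2 - x 1 * x 3 + t
       else if S = {2} then x 2 - x 1 * x 2 - x 2 * x 3 + t else if S = {3} then x 3 - x 1 * x 3 - x 2 * x 3 + t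
       else if S = {1,2} then x 1 * x 2 - t else if S = {1,3} then x 1 * x 3 - t
       else if S = {2,3} then x 2 * x 3 - t else t)"
    have v: "\<theta> {} = \<omega>" "\<theta> {1} = x 1 - x 1 * x 2 - x 1 * x 3 + t" "\<theta> {2} = x 2 - x 1 * x 2 - x 2 * x 3 + t"
      "\<theta> {3} = x 3 - x 1 * x 3 - x 2 * x 3 + t" "\<theta> {1,2} = x 1 * x 2 - t" "\<theta> {1,3} = x 1 * x 3 - t"
      "\<theta> {2,3} = x 2 * x 3 - t" "\<theta> {1,2,3} = t"
      unfolding \<theta>_def by (simp_all add: insert_eq_iff doubleton_eq_iff)
    have "lo \<le> \<omega>" "\<omega> \<le> hi" by fact+
    then have b: "0 \<le> \<omega>" "P - x 2 * x 3 \<le> \<omega>" "P - x 1 * x 3 \<le> \<omega>" "P - x 1 * x 2 \<le> \<omega>"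
       "\<omega> \<le> P + x 1 - x 1 * x 2 - x 1 * x 3" "\<omega> \<le> P + x 2 - x 1 * x 2 - x 2 * x 3"
       "\<omega> \<le> P + x 3 - x 1 * x 3 - x 2 * x 3" "\<omega> \<le> P"
      unfolding lo_eq hi_eq by auto
    have "pw_feasible 3 x \<theta>" unfolding feas3 v using b Pexp unfolding t_def by auto
    then show ?thesis using v by blast
  qed
  have m: "\<And>a b::real. 0 \<le> a \<Longrightarrow> 0 \<le> b \<Longrightarrow> 0 \<le> a * b" by simp
  have m3: "\<And>a b c::real. 0 \<le> a \<Longrightarrow> 0 \<le> b \<Longrightarrow> 0 \<le> c \<Longrightarrow> 0 \<le> a * b * c" by simp
  have o: "0 \<le> 1 - x 1" "0 \<le> 1 - x 2" "0 \<le> 1 - x 3" using x1 x2 x3 by simp_all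
  have i1: "x 1 - x 1 * x 2 = x 1 * (1 - x 2)" "x 1 - x 1 * x 3 = x 1 * (1 - x 3)"
    "x 2 - x 1 * x 2 = x 2 * (1 - x 1)" "x 2 - x 2 * x 3 = x 2 * (1 - x 3)"
    "x 3 - x 1 * x 3 = x 3 * (1 - x 1)" "x 3 - x 2 * x 3 = x 3 * (1 - x 2)"
    "P + x 1 - x 1 * x 2 - x 1 * x 3 = (1 - x 2) * (1 - x 3)"
    "P + x 2 - x 1 * x 2 - x 2 * x 3 = (1 - x 1) * (1 - x 3)"
    "P + x 3 - x 1 * x 3 - x 2 * x 3 = (1 - x 1) * (1 - x 2)"
    "x 1 - x 1 * x 2 - x 1 * x 3 + x 2 * x 3 = (1 - x 1) * x 2 * x 3 + x 1 * (1 - x 2) * (1 - x 3)"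
    "x 2 - x 1 * x 2 - x 2 * x 3 + x 1 * x 3 = (1 - x 2) * x 1 * x 3 + x 2 * (1 - x 1) * (1 - x 3)"
    "x 3 - x 1 * x 3 - x 2 * x 3 + x 1 * x 2 = (1 - x 3) * x 1 * x 2 + x 3 * (1 - x 1) * (1 - x 2)"
    unfolding P_def by (simp_all add: algebra_simps)
  have nn0: "0 \<le> x 1 - x 1 * x 2"
  proof -
    have "0 \<le> x 1 * (1 - x 2)" using x1 x2 x3 o by (simp add: m m3 add_nonneg_nonneg)
    then show ?thesis using i1(1) by linarith
  qed
  have nn1: "0 \<le> x 1 - x 1 * x 3"
  proof -
    have "0 \<le> x 1 * (1 - x 3)" using x1 x2 x3 o by (simp add: m m3 add_nonneg_nonneg)
    then show ?thesis using i1(2) by linarith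
  qed
  have nn2: "0 \<le> x 2 - x 1 * x 2"
  proof -
    have "0 \<le> x 2 * (1 - x 1)" using x1 x2 x3 o by (simp add: m m3 add_nonneg_nonneg)
    then show ?thesis using i1(3) by linarith
  qed
  have nn3: "0 \<le> x 2 - x 2 * x 3"
  proof -
    have "0 \<le> x 2 * (1 - x 3)" using x1 x2 x3 o by (simp add: m m3 add_nonneg_nonneg)
    then show ?thesis using i1(4) by linarith
  qed
  have nn4: "0 \<le> x 3 - x 1 * x 3"
  proof -
    have "0 \<le> x 3 * (1 - x 1)" using x1 x2 x3 o by (simp add: m m3 add_nonneg_nonneg)
    then show ?thesis using i1(5) by linarith
  qed
  have nn5: "0 \<le> x 3 - x 2 * x 3"
  proof -
    have "0 \<le> x 3 * (1 - x 2)" using x1 x2 x3 o by (simp add: m m3 add_nonneg_nonneg)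
    then show ?thesis using i1(6) by linarith
  qed
  have nn6: "0 \<le> P + x 1 - x 1 * x 2 - x 1 * x 3"
  proof -
    have "0 \<le> (1 - x 2) * (1 - x 3)" using x1 x2 x3 o by (simp add: m m3 add_nonneg_nonneg)
    then show ?thesis using i1(7) by linarith
  qed
  have nn7: "0 \<le> P + x 2 - x 1 * x 2 - x 2 * x 3"
  proof -
    have "0 \<le> (1 - x 1) * (1 - x 3)" using x1 x2 x3 o by (simp add: m m3 add_nonneg_nonneg)
    then show ?thesis using i1(8) by linarith
  qed
  have nn8: "0 \<le> P + x 3 - x 1 * x 3 - x 2 * x 3"
  proof -
    have "0 \<le> (1 - x 1) * (1 - x 2)" using x1 x2 x3 o by (simp add: m m3 add_nonneg_nonneg)
    then show ?thesis using i1(9) by linarith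
  qed
  have nn9: "0 \<le> x 1 - x 1 * x 2 - x 1 * x 3 + x 2 * x 3"
  proof -
    have "0 \<le> (1 - x 1) * x 2 * x 3 + x 1 * (1 - x 2) * (1 - x 3)" using x1 x2 x3 o by (simp add: m m3 add_nonneg_nonneg)
    then show ?thesis using i1(10) by linarith
  qed
  have nn10: "0 \<le> x 2 - x 1 * x 2 - x 2 * x 3 + x 1 * x 3"
  proof -
    have "0 \<le> (1 - x 2) * x 1 * x 3 + x 2 * (1 - x 1) * (1 - x 3)" using x1 x2 x3 o by (simp add: m m3 add_nonneg_nonneg)
    then show ?thesis using i1(11) by linarith
  qed
  have nn11: "0 \<le> x 3 - x 1 * x 3 - x 2 * x 3 + x 1 * x 2"
  proof -
    have "0 \<le> (1 - x 3) * x 1 * x 2 + x 3 * (1 - x 1) * (1 - x 2)" using x1 x2 x3 o by (simp add: m m3 add_nonneg_nonneg)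
    then show ?thesis using i1(12) by linarith
  qed
  have nnP: "0 \<le> P" "0 \<le> x 1 * x 2" "0 \<le> x 1 * x 3" "0 \<le> x 2 * x 3" unfolding P_def using x1 x2 x3 o by (simp_all add: m m3 add_nonneg_nonneg)
  note nn = nnP nn0 nn1 nn2 nn3 nn4 nn5 nn6 nn7 nn8 nn9 nn10 nn11
  have lohi_le: "lo \<le> hi" unfolding lo_eq hi_eq using nn by auto
  have key: "upper_pw_ext 3 f x = h + max (d * lo) (d * hi)"
    unfolding upper_pw_ext_def
  proof (rule cSup_eq_maximum)
    show "h + max (d * lo) (d * hi) \<in> {\<Sum>S\<in>Pow {1..3}. \<theta> S * f S |\<theta>. pw_feasible 3 x \<theta>}"
    proof (cases "d * hi \<le> d * lo")
      case True
      obtain \<theta> where th: "pw_feasible 3 x \<theta>" "\<theta> {} = lo" using B[of lo] lohi_le by auto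
      have "h + max (d*lo) (d*hi) = (\<Sum>S\<in>Pow {1..3}. \<theta> S * f S)" using A[OF th(1)] th(2) True by (simp add: max_def)
      then show ?thesis using th(1) by blast
    next
      case False
      obtain \<theta> where th: "pw_feasible 3 x \<theta>" "\<theta> {} = hi" using B[of hi] lohi_le by auto
      have "h + max (d*lo) (d*hi) = (\<Sum>S\<in>Pow {1..3}. \<theta> S * f S)" using A[OF th(1)] th(2) False by (simp add: max_def)
      then show ?thesis using th(1) by blast
    qed
  next
    fix y assume "y \<in> {\<Sum>S\<in>Pow {1..3}. \<theta> S * f S |\<theta>. pw_feasible 3 x \<theta>}"
    then obtain \<theta> where fe: "pw_feasible 3 x \<theta>" and y: "y = (\<Sum>S\<in>Pow {1..3}. \<theta> S * f S)" by auto
    from A[OF fe] have yy: "y = h + d * \<theta> {}" "lo \<le> \<theta> {}" "\<theta> {} \<le> hi" using y by auto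
    have "d * \<theta> {} \<le> max (d * lo) (d * hi)"
    proof (cases "0 \<le> d")
      case True
      then have "d * \<theta> {} \<le> d * hi" using yy by (simp add: mult_left_mono)
      then show ?thesis by simp
    next
      case False
      then have "d * \<theta> {} \<le> d * lo" using yy by (simp add: mult_left_mono_neg)
      then show ?thesis by simp
    qed
    then show "y \<le> h + max (d * lo) (d * hi)" using yy by simp
  qed
  show ?thesis
    using key unfolding Let_def d_def h_def lo_def hi_def xmid_def xmax_def xmin_def P_def g1_def g2_def .
qed
end
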